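(* Consider an instance with $n$ agents, $m$ divisible items and binary additive valuations (notation as in the context), and let $d$ be a real number. Then the set of items $o$ such that $x_{o,i}>0$ for some $i\in\mathsf{layer}^*_d$ is the same for every stable fractional allocation $x$. Moreover, this set consists of complete items only: for every such item $o$ and every stable $x$, $\sum_{i\in\mathsf{layer}^*_d}x_{o,i}=1$.
   Context: Agents $[n]$, items $[m]$; each agent $i$ has a set $L_i\subseteq[m]$ of liked items. A fractional allocation is a matrix $x=(x_{o,i})$ with $x_{o,i}\ge0$ and $\sum_i x_{o,i}\le1$ for each item $o$; agent $i$'s value is $\sum_{o\in L_i}x_{o,i}$. $x$ is clean if $x_{o,i}=0$ whenever $o\notin L_i$, and max-USW if it maximizes the sum of agents' values. Throughout, allocations are clean and max-USW. Profile $(h_1,\dots,h_n)$ with $h_i=\sum_o x_{o,i}$. A transfer $u\to v$: distinct agents $u=i_1,\dots,i_k=v$ ($k\ge2$), items $o_1,\dots,o_{k-1}$ with $x_{o_l,i_l}>0$ and $o_l\in L_{i_{l+1}}$, amount $0<\Delta\le\min_l x_{o_l,i_l}$, moving $\Delta$ of $o_l$ from $i_l$ to $i_{l+1}$; narrowing if $h_u-\Delta\ge h_v+\Delta$. $x$ is stable if it admits no narrowing transfer. All stable fractional allocations have the same profile; for real $d$, $\mathsf{layer}^*_d=\{i: h_i=d\}$ where $h$ is this common profile. *)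

theory Defs
  imports Complex_Main
begin

text \<open>Agents are 0..<n, items are 0..<m; x j i is the fraction of item j given to agent i.
  L i is the set of items liked by agent i.\<close>

definition is_alloc :: "nat \<Rightarrow> nat \<Rightarrow> (nat \<Rightarrow> nat \<Rightarrow> real) \<Rightarrow> bool" where
  "is_alloc n m x \<longleftrightarrow> (\<forall>j<m. \<forall>i<n. 0 \<le> x j i) \<and> (\<forall>j<m. (\<Sum>i<n. x j i) \<le> 1)"

definition value_of :: "nat \<Rightarrow> (nat \<Rightarrow> nat set) \<Rightarrow> (nat \<Rightarrow> nat \<Rightarrow> real) \<Rightarrow> nat \<Rightarrow> real" where
  "value_of m L x i = (\<Sum>j\<in>L i \<inter> {..<m}. x j i)"

definition usw :: "nat \<Rightarrow> nat \<Rightarrow> (nat \<Rightarrow> nat set) \<Rightarrow> (nat \<Rightarrow> nat \<Rightarrow> real) \<Rightarrow> real" where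
  "usw n m L x = (\<Sum>i<n. value_of m L x i)"

definition is_clean :: "nat \<Rightarrow> nat \<Rightarrow> (nat \<Rightarrow> nat set) \<Rightarrow> (nat \<Rightarrow> nat \<Rightarrow> real) \<Rightarrow> bool" where
  "is_clean n m L x \<longleftrightarrow> (\<forall>j<m. \<forall>i<n. j \<notin> L i \<longrightarrow> x j i = 0)"

definition max_usw :: "nat \<Rightarrow> nat \<Rightarrow> (nat \<Rightarrow> nat set) \<Rightarrow> (nat \<Rightarrow> nat \<Rightarrow> real) \<Rightarrow> bool" where
  "max_usw n m L x \<longleftrightarrow> is_alloc n m x \<and>
     (\<forall>y. is_alloc n m y \<longrightarrow> usw n m L y \<le> usw n m L x)"

definition profile :: "nat \<Rightarrow> (nat \<Rightarrow> nat \<Rightarrow> real) \<Rightarrow> nat \<Rightarrow> real" where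
  "profile m x i = (\<Sum>j<m. x j i)"

definition is_transfer :: "nat \<Rightarrow> nat \<Rightarrow> (nat \<Rightarrow> nat set) \<Rightarrow> (nat \<Rightarrow> nat \<Rightarrow> real)
    \<Rightarrow> nat list \<Rightarrow> nat list \<Rightarrow> real \<Rightarrow> bool" where
  "is_transfer n m L x as os \<Delta> \<longleftrightarrow>
     length as \<ge> 2 \<and> distinct as \<and> set as \<subseteq> {..<n} \<and>
     length os = length as - 1 \<and> set os \<subseteq> {..<m} \<and>
     (\<forall>l < length os. x (os ! l) (as ! l) > 0 \<and> os ! l \<in> L (as ! Suc l)) \<and>
     0 < \<Delta> \<and> (\<forall>l < length os. \<Delta> \<le> x (os ! l) (as ! l))"

definition is_narrowing :: "nat \<Rightarrow> nat \<Rightarrow> (nat \<Rightarrow> nat set) \<Rightarrow> (nat \<Rightarrow> nat \<Rightarrow> real)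
    \<Rightarrow> nat list \<Rightarrow> nat list \<Rightarrow> real \<Rightarrow> bool" where
  "is_narrowing n m L x as os \<Delta> \<longleftrightarrow>
     is_transfer n m L x as os \<Delta> \<and>
     profile m x (hd as) - \<Delta> \<ge> profile m x (last as) + \<Delta>"

definition stable :: "nat \<Rightarrow> nat \<Rightarrow> (nat \<Rightarrow> nat set) \<Rightarrow> (nat \<Rightarrow> nat \<Rightarrow> real) \<Rightarrow> bool" where
  "stable n m L x \<longleftrightarrow> is_alloc n m x \<and> is_clean n m L x \<and> max_usw n m L x \<and>
     \<not> (\<exists>as os \<Delta>. is_narrowing n m L x as os \<Delta>)"

text \<open>layer*_d: agents whose (common, stable) profile value equals d.  Since all stable
  allocations share the same profile, this is {i. h_i = d} for the common profile h.\<close>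

definition layer_star :: "nat \<Rightarrow> nat \<Rightarrow> (nat \<Rightarrow> nat set) \<Rightarrow> real \<Rightarrow> nat set" where
  "layer_star n m L d = {i. i < n \<and> (\<forall>x. stable n m L x \<longrightarrow> profile m x i = d)}"

end

theory Submission
  imports Defs
begin

lemma stable_edge:
  assumes st: "stable n m L x" and ij: "i < n" "k < n" "j < m" "i \<noteq> k"
    and pos: "x j i > 0" and lk: "j \<in> L k"
  shows "profile m x i \<le> profile m x k"
proof (rule ccontr)
  assume "\<not> ?thesis"
  hence lt: "profile m x k < profile m x i" by simp
  define D where "D = min (x j i) ((profile m x i - profile m x k) / 2)"
  have d1: "0 < D" "D \<le> x j i" using pos lt unfolding D_def by auto
  have d2: "profile m x i - D \<ge> profile m x k + D"
  proof -
    have "D \<le> (profile m x i - profile m x k) / 2" unfolding D_def by (rule min.cobounded2)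
    thus ?thesis by simp
  qed
  have "is_narrowing n m L x [i,k] [j] D"
    unfolding is_narrowing_def is_transfer_def
    using ij pos lk d1 d2 by (auto simp: less_Suc_eq)
  thus False using st unfolding stable_def by blast
qed

lemma stable_full:
  assumes st: "stable n m L x" and ij: "i < n" "j < m" and li: "j \<in> L i"
  shows "(\<Sum>k<n. x j k) = 1"
proof (rule ccontr)
  assume ne: "(\<Sum>k<n. x j k) \<noteq> 1"
  have al: "is_alloc n m x" and mx: "\<forall>y. is_alloc n m y \<longrightarrow> usw n m L y \<le> usw n m L x"
    using st unfolding stable_def max_usw_def by auto
  have le: "(\<Sum>k<n. x j k) \<le> 1" using al ij unfolding is_alloc_def by auto
  define \<delta> where "\<delta> = 1 - (\<Sum>k<n. x j k)"
  have dpos: "\<delta> > 0" using le ne unfolding \<delta>_def by simp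
  define y where "y = x(j := (x j)(i := x j i + \<delta>))"
  have sy: "(\<Sum>k<n. y j k) = (\<Sum>k<n. x j k) + \<delta>"
  proof -
    have "(\<Sum>k<n. y j k) = y j i + (\<Sum>k\<in>{..<n}-{i}. y j k)"
      using ij by (simp add: sum.remove)
    also have "(\<Sum>k\<in>{..<n}-{i}. y j k) = (\<Sum>k\<in>{..<n}-{i}. x j k)"
      by (rule sum.cong) (auto simp: y_def)
    also have "y j i = x j i + \<delta>" by (simp add: y_def)
    also have "x j i + \<delta> + (\<Sum>k\<in>{..<n}-{i}. x j k) = (\<Sum>k<n. x j k) + \<delta>"
      using ij by (simp add: sum.remove)
    finally show ?thesis .
  qed
  have ay: "is_alloc n m y"
    using al sy dpos le unfolding is_alloc_def
    by (auto simp: y_def \<delta>_def add_nonneg_nonneg)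
  have vi: "value_of m L y i = value_of m L x i + \<delta>"
  proof -
    have jin: "j \<in> L i \<inter> {..<m}" using li ij by auto
    have f: "finite (L i \<inter> {..<m})" by simp
    have "value_of m L y i = y j i + (\<Sum>j'\<in>(L i \<inter> {..<m})-{j}. y j' i)"
      unfolding value_of_def using sum.remove[OF f jin] by simp
    also have "(\<Sum>j'\<in>(L i \<inter> {..<m})-{j}. y j' i) = (\<Sum>j'\<in>(L i \<inter> {..<m})-{j}. x j' i)"
      by (rule sum.cong) (auto simp: y_def)
    also have "y j i = x j i + \<delta>" by (simp add: y_def)
    also have "x j i + \<delta> + (\<Sum>j'\<in>(L i \<inter> {..<m})-{j}. x j' i) = value_of m L x i + \<delta>"
      unfolding value_of_def using sum.remove[OF f jin, of "\<lambda>j'. x j' i"] by simp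
    finally show ?thesis .
  qed
  have vk: "value_of m L y k = value_of m L x k" if "k \<noteq> i" for k
    unfolding value_of_def by (rule sum.cong) (auto simp: y_def that)
  have "usw n m L y = value_of m L y i + (\<Sum>k\<in>{..<n}-{i}. value_of m L y k)"
    unfolding usw_def using ij by (simp add: sum.remove)
  also have "(\<Sum>k\<in>{..<n}-{i}. value_of m L y k) = (\<Sum>k\<in>{..<n}-{i}. value_of m L x k)"
    by (rule sum.cong) (auto simp: vk)
  also have "value_of m L y i + (\<Sum>k\<in>{..<n}-{i}. value_of m L x k) = usw n m L x + \<delta>"
    unfolding usw_def vi using ij by (simp add: sum.remove)
  finally have "usw n m L y = usw n m L x + \<delta>" .
  with mx ay dpos show False by fastforce
qed

lemma clean_like:
  assumes st: "stable n m L x" and "i < n" "j < m" "x j i > 0"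
  shows "j \<in> L i"
  using assms unfolding stable_def is_clean_def by force

lemma nonneg:
  assumes st: "stable n m L x" and "i < n" "j < m"
  shows "x j i \<ge> 0"
  using assms unfolding stable_def is_alloc_def by force

lemma level_ineq:
  assumes sx: "stable n m L x" and sy: "stable n m L y"
  shows "(\<Sum>k\<in>{k. k < n \<and> profile m x k \<le> c}. profile m y k)
       \<le> (\<Sum>k\<in>{k. k < n \<and> profile m x k \<le> c}. profile m x k)"
proof -
  let ?Lo = "{k. k < n \<and> profile m x k \<le> c}"
  have fin: "finite ?Lo" by simp
  have per: "(\<Sum>k\<in>?Lo. y j k) \<le> (\<Sum>k\<in>?Lo. x j k)" if jm: "j < m" for j
  proof (cases "\<exists>k\<in>?Lo. j \<in> L k")
    case True
    then obtain k where k: "k \<in> ?Lo" "j \<in> L k" by blast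
    have out: "x j k' = 0" if "k' < n" "k' \<notin> ?Lo" for k'
    proof (rule ccontr)
      assume "x j k' \<noteq> 0"
      hence "x j k' > 0" using nonneg[OF sx that(1) jm] by simp
      moreover have "k' \<noteq> k" using that k by auto
      ultimately have "profile m x k' \<le> profile m x k"
        using stable_edge[OF sx that(1) _ jm] k by auto
      thus False using that k by auto
    qed
    have "(\<Sum>k\<in>?Lo. y j k) \<le> (\<Sum>k<n. y j k)"
      by (rule sum_mono2) (auto intro: nonneg[OF sy _ jm])
    also have "\<dots> = 1" using stable_full[OF sy _ jm k(2)] k by auto
    also have "\<dots> = (\<Sum>k<n. x j k)" using stable_full[OF sx _ jm k(2)] k by auto
    also have "\<dots> = (\<Sum>k\<in>?Lo. x j k)"
      by (rule sum.mono_neutral_right) (auto intro: out)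
    finally show ?thesis .
  next
    case False
    have "(\<Sum>k\<in>?Lo. y j k) = 0"
    proof (rule sum.neutral, rule ballI)
      fix k assume k: "k \<in> ?Lo"
      show "y j k = 0"
      proof (rule ccontr)
        assume "y j k \<noteq> 0"
        hence "y j k > 0" using nonneg[OF sy _ jm] k by force
        hence "j \<in> L k" using clean_like[OF sy _ jm] k by auto
        thus False using False k by blast
      qed
    qed
    also have "\<dots> \<le> (\<Sum>k\<in>?Lo. x j k)"
      by (rule sum_nonneg) (auto intro: nonneg[OF sx _ jm])
    finally show ?thesis .
  qed
  have "(\<Sum>k\<in>?Lo. profile m y k) = (\<Sum>j<m. \<Sum>k\<in>?Lo. y j k)"
    unfolding profile_def by (rule sum.swap)
  also have "\<dots> \<le> (\<Sum>j<m. \<Sum>k\<in>?Lo. x j k)"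
    by (rule sum_mono) (auto intro: per)
  also have "\<dots> = (\<Sum>k\<in>?Lo. profile m x k)"
    unfolding profile_def by (rule sum.swap[symmetric])
  finally show ?thesis .
qed

lemma uniq_aux:
  assumes sx: "stable n m L x" and sy: "stable n m L y"
    and i: "i < n" "profile m x i < profile m y i"
    and mn: "\<forall>k<n. profile m x k \<noteq> profile m y k \<longrightarrow>
               profile m x i \<le> min (profile m x k) (profile m y k)"
  shows False
proof -
  let ?c = "profile m x i"
  let ?Lo = "{k. k < n \<and> profile m x k \<le> ?c}"
  have "(\<Sum>k\<in>?Lo. profile m x k) < (\<Sum>k\<in>?Lo. profile m y k)"
  proof (rule sum_strict_mono_ex1)
    show "finite ?Lo" by simp
    show "\<forall>k\<in>?Lo. profile m x k \<le> profile m y k"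
    proof
      fix k assume k: "k \<in> ?Lo"
      show "profile m x k \<le> profile m y k"
      proof (cases "profile m x k = profile m y k")
        case False
        with mn k have "?c \<le> profile m y k" by auto
        with k show ?thesis by auto
      qed simp
    qed
    show "\<exists>k\<in>?Lo. profile m x k < profile m y k" using i by auto
  qed
  with level_ineq[OF sx sy, of ?c] show False by simp
qed

lemma uniq:
  assumes sx: "stable n m L x" and sy: "stable n m L y" and i: "i < n"
  shows "profile m x i = profile m y i"
proof (rule ccontr)
  assume ne: "profile m x i \<noteq> profile m y i"
  let ?f = "\<lambda>k. min (profile m x k) (profile m y k)"
  let ?D = "{k. k < n \<and> profile m x k \<noteq> profile m y k}"
  have fD: "finite ?D" by simp
  have nD: "?D \<noteq> {}" using i ne by auto
  have "Min (?f ` ?D) \<in> ?f ` ?D" using fD nD by (intro Min_in) auto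
  then obtain i0 where i0: "i0 \<in> ?D" "?f i0 = Min (?f ` ?D)" by auto
  have mn: "?f i0 \<le> ?f k" if "k \<in> ?D" for k
  proof -
    have "?f k \<in> ?f ` ?D" using that by (rule imageI)
    hence "Min (?f ` ?D) \<le> ?f k" using fD by (intro Min_le) auto
    thus ?thesis using i0(2) by simp
  qed
  show False
  proof (cases "profile m x i0 < profile m y i0")
    case True
    show False
    proof (rule uniq_aux[OF sx sy _ True])
      show "i0 < n" using i0 by auto
      show "\<forall>k<n. profile m x k \<noteq> profile m y k \<longrightarrow>
               profile m x i0 \<le> min (profile m x k) (profile m y k)"
      proof (intro allI impI)
        fix k assume "k < n" "profile m x k \<noteq> profile m y k"
        hence "?f i0 \<le> ?f k" by (intro mn) simp
        moreover have "?f i0 = profile m x i0" using True by simp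
        ultimately show "profile m x i0 \<le> ?f k" by simp
      qed
    qed
  next
    case False
    hence lt: "profile m y i0 < profile m x i0" using i0 by auto
    show False
    proof (rule uniq_aux[OF sy sx _ lt])
      show "i0 < n" using i0 by auto
      show "\<forall>k<n. profile m y k \<noteq> profile m x k \<longrightarrow>
               profile m y i0 \<le> min (profile m y k) (profile m x k)"
      proof (intro allI impI)
        fix k assume "k < n" "profile m y k \<noteq> profile m x k"
        hence "?f i0 \<le> ?f k" by (intro mn) simp
        moreover have "?f i0 = profile m y i0" using lt by simp
        ultimately show "profile m y i0 \<le> min (profile m y k) (profile m x k)" by (simp add: min.commute)
      qed
    qed
  qed
qed

lemma layer_iff:
  assumes sx: "stable n m L x"
  shows "i \<in> layer_star n m L d \<longleftrightarrow> i < n \<and> profile m x i = d"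
proof
  assume "i \<in> layer_star n m L d"
  thus "i < n \<and> profile m x i = d" using sx unfolding layer_star_def by blast
next
  assume a: "i < n \<and> profile m x i = d"
  have "\<forall>y. stable n m L y \<longrightarrow> profile m y i = d"
  proof (intro allI impI)
    fix y assume "stable n m L y"
    from uniq[OF sx this, of i] a show "profile m y i = d" by simp
  qed
  with a show "i \<in> layer_star n m L d" unfolding layer_star_def by blast
qed

lemma subset_part:
  assumes sx: "stable n m L x" and sy: "stable n m L y"
  shows "{j. j < m \<and> (\<exists>i\<in>layer_star n m L d. x j i > 0)} \<subseteq>
         {j. j < m \<and> (\<exists>i\<in>layer_star n m L d. y j i > 0)}"
proof
  fix j assume "j \<in> {j. j < m \<and> (\<exists>i\<in>layer_star n m L d. x j i > 0)}"
  then obtain i where j: "j < m" and i: "i \<in> layer_star n m L d" and p: "x j i > 0" by auto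
  have iL: "i < n" "profile m x i = d" using i layer_iff[OF sx] by auto
  have iy: "profile m y i = d" using i layer_iff[OF sy] by auto
  have li: "j \<in> L i" using clean_like[OF sx iL(1) j p] .
  have s1: "(\<Sum>k<n. y j k) = 1" using stable_full[OF sy iL(1) j li] .
  obtain k where k: "k < n" "y j k > 0"
  proof (rule ccontr)
    assume "\<not> thesis"
    hence "\<forall>k<n. y j k \<le> 0" using that by force
    hence "(\<Sum>k<n. y j k) \<le> 0" by (intro sum_nonpos) auto
    with s1 show False by simp
  qed
  have lk: "j \<in> L k" using clean_like[OF sy k(1) j k(2)] .
  have "profile m y k = d"
  proof (cases "k = i")
    case False
    have a: "profile m y k \<le> profile m y i"
      using stable_edge[OF sy k(1) iL(1) j False k(2) li] .
    have b: "profile m x i \<le> profile m x k"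
      using stable_edge[OF sx iL(1) k(1) j _ p lk] False by auto
    have "profile m x k = profile m y k" using uniq[OF sx sy k(1)] .
    with a b iL iy show ?thesis by simp
  qed (use iy in simp)
  hence "k \<in> layer_star n m L d" using layer_iff[OF sy] k by auto
  with j k show "j \<in> {j. j < m \<and> (\<exists>i\<in>layer_star n m L d. y j i > 0)}" by auto
qed

theorem lemma5:
  fixes n m :: nat and L :: "nat \<Rightarrow> nat set" and d :: real
  assumes "\<forall>i<n. L i \<subseteq> {..<m}"
  shows "(\<forall>x y. stable n m L x \<longrightarrow> stable n m L y \<longrightarrow>
            {j. j < m \<and> (\<exists>i\<in>layer_star n m L d. x j i > 0)} =
            {j. j < m \<and> (\<exists>i\<in>layer_star n m L d. y j i > 0)})
       \<and> (\<forall>x. stable n m L x \<longrightarrow>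
            (\<forall>j<m. (\<exists>i\<in>layer_star n m L d. x j i > 0) \<longrightarrow>
                   (\<Sum>i\<in>layer_star n m L d. x j i) = 1))"
proof (intro conjI allI impI)
  fix x y assume sx: "stable n m L x" and sy: "stable n m L y"
  show "{j. j < m \<and> (\<exists>i\<in>layer_star n m L d. x j i > 0)} =
        {j. j < m \<and> (\<exists>i\<in>layer_star n m L d. y j i > 0)}"
    using subset_part[OF sx sy] subset_part[OF sy sx] by (rule equalityI)
next
  fix x j assume sx: "stable n m L x" and j: "j < m"
    and "\<exists>i\<in>layer_star n m L d. x j i > 0"
  then obtain i where i: "i \<in> layer_star n m L d" and p: "x j i > 0" by auto
  have iL: "i < n" "profile m x i = d" using i layer_iff[OF sx] by auto
  have li: "j \<in> L i" using clean_like[OF sx iL(1) j p] .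
  have out: "x j k = 0" if "k < n" "k \<notin> layer_star n m L d" for k
  proof (rule ccontr)
    assume "x j k \<noteq> 0"
    hence pk: "x j k > 0" using nonneg[OF sx that(1) j] by simp
    have ki: "k \<noteq> i" using that i by auto
    have lk: "j \<in> L k" using clean_like[OF sx that(1) j pk] .
    have "profile m x i \<le> profile m x k" using stable_edge[OF sx iL(1) that(1) j _ p lk] ki by auto
    moreover have "profile m x k \<le> profile m x i" using stable_edge[OF sx that(1) iL(1) j ki pk li] .
    ultimately have "profile m x k = d" using iL by simp
    thus False using that layer_iff[OF sx] by auto
  qed
  have sub: "layer_star n m L d \<subseteq> {..<n}" unfolding layer_star_def by auto
  have "(\<Sum>i\<in>layer_star n m L d. x j i) = (\<Sum>k<n. x j k)"
  proof (rule sum.mono_neutral_left)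
    show "finite {..<n}" by simp
    show "layer_star n m L d \<subseteq> {..<n}" using sub .
    show "\<forall>k\<in>{..<n} - layer_star n m L d. x j k = 0" using out by blast
  qed
  also have "\<dots> = 1" using stable_full[OF sx iL(1) j li] .
  finally show "(\<Sum>i\<in>layer_star n m L d. x j i) = 1" .
qed

end
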